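(* Let $X$ be a compact Hausdorff space and let $Y$ be a real inner product space with inner product $\langle\cdot,\cdot\rangle$ and norm $\|y\|=\langle y,y\rangle^{1/2}$. Let $C(X,Y)$ be the space of continuous functions $X\to Y$ with the uniform norm $|||f|||=\max_{x\in X}\|f(x)\|$, let $H\subset C(X,Y)$ be a linear subspace of finite dimension $n\ge1$, let $A$ be a compact Hausdorff space, and let $\{f_a\}_{a\in A}\subset C(X,Y)$ be such that $a\mapsto f_a$ is continuous from $A$ into $C(X,Y)$. Then $f^*\in H$ satisfies $\max_{a\in A}|||f_a-f^*|||\le\max_{a\in A}|||f_a-f|||$ for all $f\in H$ if and only if there exist an integer $k$ with $1\le k\le n+1$, elements $a_1,\dots,a_k\in A$, points $x_1,\dots,x_k\in X$, and positive numbers $\lambda_1,\dots,\lambda_k$ with $\sum_{i=1}^k\lambda_i=1$ such that (i') $\sum_{i=1}^k\lambda_i\langle f_{a_i}(x_i)-f^*(x_i),\, f(x_i)\rangle = 0$ for all $f\in H$; and (ii) $\|f_{a_i}(x_i)-f^*(x_i)\| = |||f_{a_i}-f^*||| = \max_{a\in A}|||f_a-f^*|||$ for all $i$ with $1\le i\le k$. *)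

theory Defs
  imports "HOL-Analysis.Analysis"
begin

end

theory Submission
  imports Defs
begin


typedef fsv = "{f :: nat \<Rightarrow> real. finite {i. f i \<noteq> 0}}"
  by (rule exI[of _ "\<lambda>_. 0"]) simp

lemma fsv_fin: "finite {i. Rep_fsv x i \<noteq> 0}"
  using Rep_fsv[of x] by simp

lemma fsv_eqI: "(\<And>i. Rep_fsv x i = Rep_fsv y i) \<Longrightarrow> x = y"
  by (simp add: Rep_fsv_inject[symmetric] fun_eq_iff)

lemma fsv_Abs_inv: "finite {i. f i \<noteq> 0} \<Longrightarrow> Rep_fsv (Abs_fsv f) = f"
  by (simp add: Abs_fsv_inverse)

lemma fin_add: "finite {i. Rep_fsv x i + Rep_fsv y i \<noteq> (0::real)}"
  by (rule finite_subset[OF _ finite_Un[THEN iffD2, OF conjI[OF fsv_fin[of x] fsv_fin[of y]]]]) auto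
lemma fin_diff: "finite {i. Rep_fsv x i - Rep_fsv y i \<noteq> (0::real)}"
  by (rule finite_subset[OF _ finite_Un[THEN iffD2, OF conjI[OF fsv_fin[of x] fsv_fin[of y]]]]) auto
lemma fin_neg: "finite {i. - Rep_fsv x i \<noteq> (0::real)}"
  using fsv_fin[of x] by simp
lemma fin_scale: "finite {i. r * Rep_fsv x i \<noteq> (0::real)}"
  by (rule finite_subset[OF _ fsv_fin[of x]]) auto

instantiation fsv :: real_vector
begin
definition "0 = Abs_fsv (\<lambda>_. 0)"
definition "x + y = Abs_fsv (\<lambda>i. Rep_fsv x i + Rep_fsv y i)"
definition "x - y = Abs_fsv (\<lambda>i. Rep_fsv x i - Rep_fsv y i)"
definition "- x = Abs_fsv (\<lambda>i. - Rep_fsv x i)"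
definition "scaleR r x = Abs_fsv (\<lambda>i. r * Rep_fsv x i)"

lemma Rep_zero[simp]: "Rep_fsv 0 i = 0" by (simp add: zero_fsv_def fsv_Abs_inv)
lemma Rep_plus[simp]: "Rep_fsv (x + y) i = Rep_fsv x i + Rep_fsv y i"
  by (simp add: plus_fsv_def fsv_Abs_inv[OF fin_add])
lemma Rep_minus[simp]: "Rep_fsv (x - y) i = Rep_fsv x i - Rep_fsv y i"
  by (simp add: minus_fsv_def fsv_Abs_inv[OF fin_diff])
lemma Rep_uminus[simp]: "Rep_fsv (- x) i = - Rep_fsv x i"
  by (simp add: uminus_fsv_def fsv_Abs_inv[OF fin_neg])
lemma Rep_scaleR[simp]: "Rep_fsv (scaleR r x) i = r * Rep_fsv x i"
  by (simp add: scaleR_fsv_def fsv_Abs_inv[OF fin_scale])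

instance
  by standard (auto intro!: fsv_eqI simp: algebra_simps)
end

definition fsupp :: "fsv \<Rightarrow> nat set" where "fsupp x = {i. Rep_fsv x i \<noteq> 0}"

lemma finite_fsupp[simp]: "finite (fsupp x)" by (simp add: fsupp_def fsv_fin)

definition fdot :: "fsv \<Rightarrow> fsv \<Rightarrow> real" where
  "fdot x y = (\<Sum>i\<in>fsupp x. Rep_fsv x i * Rep_fsv y i)"

lemma fdot_eq: "finite F \<Longrightarrow> fsupp x \<subseteq> F \<Longrightarrow> fdot x y = (\<Sum>i\<in>F. Rep_fsv x i * Rep_fsv y i)"
  unfolding fdot_def by (rule sum.mono_neutral_left) (auto simp: fsupp_def)

lemma fdot_eq2: "finite F \<Longrightarrow> fsupp y \<subseteq> F \<Longrightarrow> fdot x y = (\<Sum>i\<in>F. Rep_fsv x i * Rep_fsv y i)"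
proof -
  assume a: "finite F" "fsupp y \<subseteq> F"
  have "fdot x y = (\<Sum>i\<in>F \<union> fsupp x. Rep_fsv x i * Rep_fsv y i)"
    using fdot_eq[of "F \<union> fsupp x" x y] a by auto
  also have "\<dots> = (\<Sum>i\<in>F. Rep_fsv x i * Rep_fsv y i)"
    by (rule sum.mono_neutral_right) (use a fsv_fin[of x] in \<open>auto simp: fsupp_def\<close>)
  finally show ?thesis .
qed

instantiation fsv :: real_inner
begin
definition "inner_fsv = fdot"
definition "norm_fsv x = sqrt (fdot x x)"
definition "sgn_fsv x = x /\<^sub>R norm x" for x :: fsv
definition "dist_fsv x y = norm (x - y)" for x y :: fsv
definition "uniformity_fsv = (INF e\<in>{0<..}. principal {(x, y::fsv). dist x y < e})"
definition "open_fsv U = (\<forall>x\<in>U. \<forall>\<^sub>F (x', y) in uniformity. x' = x \<longrightarrow> y \<in> U)" for U :: "fsv set"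

instance
proof
  fix x y z :: fsv and r :: real
  let ?F = "fsupp x \<union> fsupp y \<union> fsupp z"
  have F: "finite ?F" by simp
  have subs: "fsupp x \<subseteq> ?F" "fsupp y \<subseteq> ?F" "fsupp z \<subseteq> ?F" by auto
  show "inner x y = inner y x"
    proof -
    have "fsupp x \<subseteq> ?F" "fsupp y \<subseteq> ?F" by auto
    then show ?thesis unfolding inner_fsv_def using fdot_eq[OF F, of x y] fdot_eq[OF F, of y x]
      by (simp add: mult.commute)
  qed
  show "inner (x + y) z = inner x z + inner y z"
    unfolding inner_fsv_def using fdot_eq2[OF F subs(3), of "x+y"] fdot_eq2[OF F subs(3), of x] fdot_eq2[OF F subs(3), of y]
    by (auto simp: algebra_simps sum.distrib)
  show "inner (r *\<^sub>R x) y = r * inner x y"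
    unfolding inner_fsv_def using fdot_eq2[OF F subs(2), of "r *\<^sub>R x"] fdot_eq2[OF F subs(2), of x]
    by (auto simp: algebra_simps sum_distrib_left)
  show "0 \<le> inner x x"
    unfolding inner_fsv_def fdot_def by (simp add: sum_nonneg)
  show "inner x x = 0 \<longleftrightarrow> x = 0"
  proof
    assume "inner x x = 0"
    then have "\<forall>i\<in>fsupp x. Rep_fsv x i * Rep_fsv x i = 0"
      unfolding inner_fsv_def fdot_def by (subst (asm) sum_nonneg_eq_0_iff) auto
    then show "x = 0" by (intro fsv_eqI) (auto simp: fsupp_def)
  qed (simp add: inner_fsv_def fdot_def fsupp_def)
  show "norm x = sqrt (inner x x)" by (simp add: norm_fsv_def inner_fsv_def)
qed (simp_all add: sgn_fsv_def dist_fsv_def uniformity_fsv_def open_fsv_def)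
end




lemma carath_dim:
  fixes p :: "'a::real_vector set"
  assumes B: "finite B" "p \<subseteq> span B" and yin: "y \<in> convex hull p"
  shows "\<exists>S u. finite S \<and> S \<subseteq> p \<and> card S \<le> card B + 1 \<and>
        (\<forall>x\<in>S. 0 \<le> u x) \<and> sum u S = 1 \<and> sum (\<lambda>v. u v *\<^sub>R v) S = y"
proof -
  let ?P = "\<lambda>n. \<exists>S u. finite S \<and> card S = n \<and> S \<subseteq> p \<and> (\<forall>x\<in>S. 0 \<le> u x) \<and>
    sum u S = 1 \<and> (\<Sum>v\<in>S. u v *\<^sub>R v) = y"
  from yin have "\<exists>S u. finite S \<and> S \<subseteq> p \<and> (\<forall>x\<in>S. 0 \<le> u x) \<and> sum u S = 1 \<and> (\<Sum>v\<in>S. u v *\<^sub>R v) = y"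
    unfolding convex_hull_explicit by auto
  then obtain N where "?P N" by auto
  then have "\<exists>n\<le>N. (\<forall>k<n. \<not> ?P k) \<and> ?P n"
    by (rule_tac ex_least_nat_le, auto)
  then obtain n where "?P n" and smallest: "\<forall>k<n. \<not> ?P k"
    by blast
  then obtain S u where S: "finite S" "card S = n" "S\<subseteq>p" 
    and u: "\<forall>x\<in>S. 0 \<le> u x" "sum u S = 1"  "(\<Sum>v\<in>S. u v *\<^sub>R v) = y" by auto
  have "card S \<le> card B + 1"
  proof (rule ccontr, simp only: not_le)
    assume big: "card B + 1 < card S"
    have "affine_dependent S"
    proof -
      have "S \<noteq> {}" using big by auto
      then obtain a where a: "a \<in> S" by auto
      let ?T = "{x - a |x. x \<in> S - {a}}"
      have *: "?T = (\<lambda>x. x - a) ` (S - {a})" by auto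
      have cT: "card ?T = card (S - {a})"
        unfolding * by (simp add: card_image inj_on_def)
      have Tsub: "?T \<subseteq> span B"
        using S(3) B(2) a by (auto intro!: span_diff)
      have "dependent ?T"
      proof (rule ccontr)
        assume ind: "\<not> dependent ?T"
        have "card ?T \<le> card B" using independent_span_bound[OF B(1) ind Tsub] by simp
        then show False using cT big S(1) a by simp
      qed
      then have "affine_dependent (insert a (S - {a}))"
        by (intro dependent_imp_affine_dependent) auto
      then show ?thesis using a by (simp add: insert_absorb)
    qed
    then obtain w v where wv: "sum w S = 0" "v\<in>S" "w v \<noteq> 0" "(\<Sum>v\<in>S. w v *\<^sub>R v) = 0"
      using affine_dependent_explicit_finite[OF S(1)] by auto
    define i where "i = (\<lambda>v. (u v) / (- w v)) ` {v\<in>S. w v < 0}"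
    define t where "t = Min i"
    have "\<exists>x\<in>S. w x < 0"
      by (smt (verit, best) S(1) sum_pos2 wv)
    then have "i \<noteq> {}" unfolding i_def by auto
    then have "t \<ge> 0"
      using Min_ge_iff[of i 0] and S(1) u[unfolded le_less]
      unfolding t_def i_def
      by (auto simp: divide_le_0_iff)
    have t: "\<forall>v\<in>S. u v + t * w v \<ge> 0"
    proof
      fix v
      assume "v \<in> S"
      then have v: "0 \<le> u v"
        using u(1) by blast
      show "0 \<le> u v + t * w v"
      proof (cases "w v < 0")
        case False
        thus ?thesis using v \<open>t\<ge>0\<close> by auto
      next
        case True
        then have "t \<le> u v / (- w v)"
          using \<open>v\<in>S\<close> S unfolding t_def i_def by (auto intro: Min_le)
        then show ?thesis
          unfolding real_0_le_add_iff
          using True neg_le_minus_divide_eq by auto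
      qed
    qed
    obtain a where "a \<in> S" and "t = (\<lambda>v. (u v) / (- w v)) a" and "w a < 0"
      using Min_in[OF _ \<open>i\<noteq>{}\<close>] and S(1) unfolding i_def t_def by auto
    then have a: "a \<in> S" "u a + t * w a = 0" by auto
    have *: "\<And>f. sum f (S - {a}) = sum f S - ((f a)::'b::ab_group_add)"
      unfolding sum.remove[OF S(1) \<open>a\<in>S\<close>] by auto
    have "(\<Sum>v\<in>S. u v + t * w v) = 1"
      by (metis add.right_neutral mult_zero_right sum.distrib sum_distrib_left u(2) wv(1))
    moreover have "(\<Sum>v\<in>S. u v *\<^sub>R v + (t * w v) *\<^sub>R v) - (u a *\<^sub>R a + (t * w a) *\<^sub>R a) = y"
      unfolding sum.distrib u(3) scaleR_scaleR[symmetric] scaleR_right.sum [symmetric] wv(4)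
      using a(2) [THEN eq_neg_iff_add_eq_0 [THEN iffD2]] by simp
    ultimately have "?P (n - 1)"
      apply (rule_tac x="(S - {a})" in exI)
      apply (rule_tac x="\<lambda>v. u v + t * w v" in exI)
      using S t a
      apply (auto simp: * scaleR_left_distrib)
      done
    then show False
      using smallest[THEN spec[where x="n - 1"]] by auto
  qed
  then show ?thesis
    using S u by auto
qed



primrec Kset :: "'a::real_normed_vector set \<Rightarrow> nat \<Rightarrow> 'a set" where
  "Kset W 0 = W"
| "Kset W (Suc m) = (\<lambda>z. (1 - fst z) *\<^sub>R fst (snd z) + fst z *\<^sub>R snd (snd z)) ` ({0..1::real} \<times> (Kset W m \<times> W))"

lemma Kset_compact: "compact W \<Longrightarrow> compact (Kset W m)"
proof (induction m)
  case 0 then show ?case by simp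
next
  case (Suc m)
  have c: "continuous_on ({0..1::real} \<times> (Kset W m \<times> W)) (\<lambda>z::real \<times> 'a \<times> 'a. (1 - fst z) *\<^sub>R fst (snd z) + fst z *\<^sub>R snd (snd z))"
    by (intro continuous_intros)
  show ?case unfolding Kset.simps
    by (rule compact_continuous_image[OF c compact_Times[OF compact_Icc compact_Times[OF Suc.IH[OF Suc.prems] Suc.prems]]])
qed

lemma Kset_hull: "Kset W m \<subseteq> convex hull W"
proof (induction m)
  case 0 then show ?case by (simp add: hull_subset)
next
  case (Suc m)
  show ?case
  proof
    fix z assume "z \<in> Kset W (Suc m)"
    then obtain t u w where z: "z = (1 - t) *\<^sub>R u + t *\<^sub>R w" "0 \<le> t" "t \<le> 1" "u \<in> Kset W m" "w \<in> W"
      by auto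
    have "u \<in> convex hull W" using z(4) Suc by blast
    have "w \<in> convex hull W" using z(5) hull_subset[of W convex] by blast
    then show "z \<in> convex hull W"
      using convexD[OF convex_convex_hull \<open>u \<in> convex hull W\<close>, of w "1 - t" t] z by simp
  qed
qed

lemma Kset_mono: assumes "w0 \<in> W" shows "Kset W m \<subseteq> Kset W (Suc m)"
proof
  fix u assume "u \<in> Kset W m"
  then have "(0::real, u, w0) \<in> {0..1} \<times> (Kset W m \<times> W)" using assms by auto
  then show "u \<in> Kset W (Suc m)" unfolding Kset.simps by (rule rev_image_eqI) simp
qed

lemma Kset_comb:
  fixes W :: "'a::real_normed_vector set"
  assumes "finite S" "S \<noteq> {}"
  shows "S \<subseteq> W \<Longrightarrow> card S \<le> m + 1 \<Longrightarrow> (\<forall>x\<in>S. 0 \<le> u x) \<Longrightarrow> sum u S = 1 \<Longrightarrow>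
    (\<Sum>v\<in>S. u v *\<^sub>R v) \<in> Kset W m"
  using assms
proof (induction S arbitrary: m u rule: finite_ne_induct)
  case (singleton x)
  have "x \<in> Kset W 0" using singleton by simp
  moreover have "Kset W 0 \<subseteq> Kset W m"
    using Kset_mono[of x W] singleton by (induction m) auto
  ultimately show ?case using singleton by auto
next
  case (insert x F)
  have cF: "card F \<ge> 1" using insert by (simp add: Suc_leI card_gt_0_iff)
  have "card F \<le> m" using insert by simp
  then obtain m' where m: "m = Suc m'" using cF by (cases m) auto
  have xW: "x \<in> W" using insert by auto
  have sum_ins: "u x + sum u F = 1" using insert by simp
  show ?case
  proof (cases "u x = 1")
    case True
    then have "sum u F = 0" using sum_ins by simp
    then have F0: "\<forall>v\<in>F. u v = 0" using insert sum_nonneg_eq_0_iff[of F u] by auto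
    have "(\<Sum>v\<in>insert x F. u v *\<^sub>R v) = x" using insert True F0 by simp
    moreover have "x \<in> Kset W m"
    proof -
      have "x \<in> Kset W 0" using xW by simp
      moreover have "Kset W 0 \<subseteq> Kset W m"
        using Kset_mono[of x W] xW by (induction m) auto
      ultimately show ?thesis by auto
    qed
    ultimately show ?thesis by simp
  next
    case False
    have ux: "0 \<le> u x" using insert by auto
    have "sum u F \<ge> 0" using insert.prems by (intro sum_nonneg) auto
    then have s: "sum u F > 0" using False ux sum_ins by auto
    define s where "s = sum u F"
    have IH: "(\<Sum>v\<in>F. (u v / s) *\<^sub>R v) \<in> Kset W m'"
      using insert.IH[of m' "\<lambda>v. u v / s"] insert.prems \<open>card F \<le> m\<close> m s s_def
      by (auto simp: sum_divide_distrib[symmetric])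
    have eq: "(\<Sum>v\<in>insert x F. u v *\<^sub>R v) = (1 - u x) *\<^sub>R (\<Sum>v\<in>F. (u v / s) *\<^sub>R v) + u x *\<^sub>R x"
    proof -
      have "(1 - u x) = s" using sum_ins s_def by simp
      then have "(1 - u x) *\<^sub>R (\<Sum>v\<in>F. (u v / s) *\<^sub>R v) = (\<Sum>v\<in>F. u v *\<^sub>R v)"
        using s s_def by (simp add: scaleR_sum_right)
      then show ?thesis using insert by simp
    qed
    have "u x \<le> 1" using sum_ins s by simp
    then have "(u x, (\<Sum>v\<in>F. (u v / s) *\<^sub>R v), x) \<in> {0..1} \<times> (Kset W m' \<times> W)"
      using ux IH xW by auto
    then show ?thesis unfolding eq m Kset.simps by (rule rev_image_eqI) simp
  qed
qed

lemma sep_min_norm: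
  fixes W :: "'a::real_inner set"
  assumes "compact W" "W \<noteq> {}" "finite B" "W \<subseteq> span B" "0 \<notin> convex hull W"
  shows "\<exists>y. y \<noteq> 0 \<and> (\<forall>w\<in>W. inner y w \<ge> inner y y)"
proof -
  let ?K = "Kset W (card B)"
  have Keq: "?K = convex hull W"
  proof
    show "?K \<subseteq> convex hull W" by (rule Kset_hull)
    show "convex hull W \<subseteq> ?K"
    proof
      fix y assume "y \<in> convex hull W"
      from carath_dim[OF assms(3,4) this] obtain S u where Su: "finite S" "S \<subseteq> W" "card S \<le> card B + 1"
        "\<forall>x\<in>S. 0 \<le> u x" "sum u S = 1" "(\<Sum>v\<in>S. u v *\<^sub>R v) = y" by blast
      have "S \<noteq> {}" using Su(5) by auto
      then show "y \<in> ?K" using Kset_comb[OF Su(1) _ Su(2-5)] Su(6) by auto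
    qed
  qed
  have "compact ?K" using Kset_compact assms(1) by blast
  moreover have "?K \<noteq> {}" using Keq assms(2) by simp
  ultimately obtain y where y: "y \<in> ?K" "\<forall>z\<in>?K. norm y \<le> norm z"
    using continuous_attains_inf[of ?K norm] by (auto intro: continuous_intros)
  have y0: "y \<noteq> 0" using y(1) Keq assms(5) by auto
  have "inner y w \<ge> inner y y" if w: "w \<in> W" for w
  proof (rule ccontr)
    assume "\<not> inner y w \<ge> inner y y"
    then have "inner (0 - y) (w - y) > 0" by (simp add: inner_diff)
    from closer_point_lemma[OF this] obtain u where u: "u > 0" "u \<le> 1"
      "dist (y + u *\<^sub>R (w - y)) 0 < dist y 0" by blast
    have "y + u *\<^sub>R (w - y) = (1 - u) *\<^sub>R y + u *\<^sub>R w" by (simp add: algebra_simps)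
    moreover have "(1 - u) *\<^sub>R y + u *\<^sub>R w \<in> convex hull W"
      using y(1) Keq w hull_subset[of W convex] u
      by (intro convexD) auto
    ultimately have "y + u *\<^sub>R (w - y) \<in> ?K" using Keq by simp
    then have "norm y \<le> norm (y + u *\<^sub>R (w - y))" using y(2) by blast
    then show False using u(3) by (simp add: dist_norm)
  qed
  then show ?thesis using y0 by blast
qed




lemma joint_cont:
  fixes F :: "'a::t2_space \<Rightarrow> ('x::t2_space \<Rightarrow>\<^sub>C 'y::real_normed_vector)"
  assumes F: "continuous_on UNIV F"
  shows "continuous_on UNIV (\<lambda>p. apply_bcontfun (F (fst p)) (snd p))"
proof -
  have "isCont (\<lambda>p. apply_bcontfun (F (fst p)) (snd p)) p0" for p0 :: "'a \<times> 'x"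
  proof -
    define a0 where "a0 = fst p0"
    define x0 where "x0 = snd p0"
    have cF: "isCont F a0" using F by (simp add: continuous_on_eq_continuous_at)
    have t1: "((\<lambda>p. F (fst p)) \<longlongrightarrow> F a0) (at p0)"
      unfolding a0_def by (rule isCont_tendsto_compose[OF cF[unfolded a0_def] tendsto_fst[OF tendsto_ident_at]])
    have t2: "((\<lambda>p. norm (F (fst p) - F a0)) \<longlongrightarrow> 0) (at p0)"
      using tendsto_norm[OF tendsto_diff[OF t1 tendsto_const[of "F a0"]]] by simp
    have t3: "((\<lambda>p. apply_bcontfun (F (fst p)) (snd p) - apply_bcontfun (F a0) (snd p)) \<longlongrightarrow> 0) (at p0)"
    proof (rule Lim_null_comparison[OF _ t2])
      show "\<forall>\<^sub>F p in at p0. norm (apply_bcontfun (F (fst p)) (snd p) - apply_bcontfun (F a0) (snd p)) \<le> norm (F (fst p) - F a0)"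
      proof (rule always_eventually, rule allI)
        fix p :: "'a \<times> 'x"
        show "norm (apply_bcontfun (F (fst p)) (snd p) - apply_bcontfun (F a0) (snd p)) \<le> norm (F (fst p) - F a0)"
          using norm_bounded[of "F (fst p) - F a0" "snd p"] by simp
      qed
    qed
    have c0: "isCont (apply_bcontfun (F a0)) x0"
      using continuous_on_apply_bcontfun[of UNIV "F a0"] continuous_on_eq_continuous_at[OF open_UNIV] by blast
    have t4: "((\<lambda>p. apply_bcontfun (F a0) (snd p)) \<longlongrightarrow> apply_bcontfun (F a0) x0) (at p0)"
      unfolding x0_def by (rule isCont_tendsto_compose[OF c0[unfolded x0_def] tendsto_snd[OF tendsto_ident_at]])
    have "((\<lambda>p. (apply_bcontfun (F (fst p)) (snd p) - apply_bcontfun (F a0) (snd p)) + apply_bcontfun (F a0) (snd p))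
       \<longlongrightarrow> 0 + apply_bcontfun (F a0) x0) (at p0)"
      by (rule tendsto_add[OF t3 t4])
    then show ?thesis unfolding isCont_def a0_def x0_def by simp
  qed
  then show ?thesis by (simp add: continuous_on_eq_continuous_at)
qed

lemma apply_sum: "apply_bcontfun (\<Sum>s\<in>S. f s) x = (\<Sum>s\<in>S. apply_bcontfun (f s) x)"
  by (induction S rule: infinite_finite_induct) auto

lemma Rep_sum: "Rep_fsv (\<Sum>s\<in>S. f s) i = (\<Sum>s\<in>S. Rep_fsv (f s) i)"
  by (induction S rule: infinite_finite_induct) auto

definition unitv :: "nat \<Rightarrow> fsv" where "unitv j = Abs_fsv (\<lambda>i. if i = j then 1 else 0)"

lemma Rep_unitv: "Rep_fsv (unitv j) i = (if i = j then 1 else 0)"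
proof -
  have "finite {i. (if i = j then 1 else 0::real) \<noteq> 0}" by simp
  then show ?thesis unfolding unitv_def by (simp add: fsv_Abs_inv)
qed




lemma improve:
  fixes fa :: "'a::t2_space \<Rightarrow> ('x::t2_space \<Rightarrow>\<^sub>C 'y::real_inner)" and fstar g :: "'x \<Rightarrow>\<^sub>C 'y"
  assumes cX: "compact (UNIV::'x set)" and cA: "compact (UNIV::'a set)"
    and cont: "continuous_on UNIV fa" and Mpos: "M > 0"
    and eM: "\<And>a x. norm (apply_bcontfun (fa a) x - apply_bcontfun fstar x) \<le> M"
    and dpos: "\<delta> > 0"
    and hyp: "\<And>a x. norm (apply_bcontfun (fa a) x - apply_bcontfun fstar x) = M \<Longrightarrow>
        inner (apply_bcontfun (fa a) x - apply_bcontfun fstar x) (apply_bcontfun g x) \<ge> \<delta>"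
  shows "\<exists>t. (SUP a. norm (fa a - (fstar + t *\<^sub>R g))) < M"
proof -
  define e where "e = (\<lambda>p::'a \<times> 'x. apply_bcontfun (fa (fst p)) (snd p) - apply_bcontfun fstar (snd p))"
  have ce: "continuous_on UNIV e"
    unfolding e_def
    by (intro continuous_on_diff joint_cont[OF cont] continuous_on_compose2[OF continuous_on_apply_bcontfun continuous_on_snd]) auto
  have cg: "continuous_on UNIV (\<lambda>p::'a \<times> 'x. apply_bcontfun g (snd p))"
    by (rule continuous_on_compose2[OF continuous_on_apply_bcontfun continuous_on_snd]) auto
  have cU: "compact (UNIV :: ('a \<times> 'x) set)"
    using compact_Times[OF cA cX] by simp
  define F where "F = {p. inner (e p) (apply_bcontfun g (snd p)) \<le> \<delta> / 2}"
  have "closed F" unfolding F_def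
    by (intro closed_Collect_le continuous_on_inner ce cg continuous_on_const)
  then have cF: "compact F" using cU by (metis compact_Int_closed inf_top.left_neutral)
  have eM': "\<And>p. norm (e p) \<le> M" unfolding e_def using eM by blast
  have hyp': "\<And>p. norm (e p) = M \<Longrightarrow> inner (e p) (apply_bcontfun g (snd p)) \<ge> \<delta>"
    unfolding e_def using hyp by blast
  obtain M1 where M1: "M1 < M" "0 \<le> M1" "\<And>p. p \<in> F \<Longrightarrow> norm (e p) \<le> M1"
  proof (cases "F = {}")
    case True then show ?thesis using that[of 0] Mpos by auto
  next
    case False
    have "continuous_on F (\<lambda>p. norm (e p))"
      by (intro continuous_on_norm continuous_on_subset[OF ce]) auto
    from continuous_attains_sup[OF cF False this] obtain p1 where p1: "p1 \<in> F" "\<And>p. p \<in> F \<Longrightarrow> norm (e p) \<le> norm (e p1)"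
      by blast
    have "norm (e p1) \<noteq> M"
    proof
      assume "norm (e p1) = M"
      then have "inner (e p1) (apply_bcontfun g (snd p1)) \<ge> \<delta>" by (rule hyp')
      then show False using p1(1) dpos unfolding F_def by auto
    qed
    then have "norm (e p1) < M" using eM'[of p1] by auto
    then show ?thesis using that[of "norm (e p1)"] p1 by auto
  qed
  define G where "G = norm g"
  have G0: "G \<ge> 0" unfolding G_def by simp
  define t where "t = min ((M - M1) / (2*(G+1))) (\<delta> / (2*(G*G+1)))"
  have tpos: "t > 0" unfolding t_def using M1 G0 dpos by (auto intro!: divide_pos_pos add_nonneg_pos)
  have t1: "t * G < M - M1"
  proof -
    have "t \<le> (M - M1) / (2*(G+1))" unfolding t_def by simp
    then have "t * G \<le> (M - M1) / (2*(G+1)) * G" using G0 by (rule mult_right_mono)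
    also have "\<dots> = (M - M1) / 2 * (G / (G + 1))" using G0 by (simp add: field_simps)
    also have "\<dots> \<le> (M - M1) / 2 * 1"
      using G0 M1 by (intro mult_left_mono) auto
    also have "\<dots> < M - M1" using M1 by simp
    finally show ?thesis .
  qed
  have t2: "t * (G * G) < \<delta>"
  proof -
    have "t \<le> \<delta> / (2*(G*G+1))" unfolding t_def by simp
    then have "t * (G*G) \<le> \<delta> / (2*(G*G+1)) * (G*G)" using G0 by (intro mult_right_mono) auto
    also have "\<dots> = \<delta> / 2 * ((G*G) / (G*G + 1))" using G0 by (simp add: field_simps)
    also have "\<dots> \<le> \<delta> / 2 * 1"
    proof (intro mult_left_mono)
      have "G * G \<ge> 0" using G0 by simp
      then show "G * G / (G * G + 1) \<le> 1" by (simp add: divide_le_eq_1 add_nonneg_pos)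
    qed (use dpos in auto)
    also have "\<dots> < \<delta>" using dpos by simp
    finally show ?thesis .
  qed
  have key: "norm (e p - t *\<^sub>R apply_bcontfun g (snd p)) < M" for p
  proof -
    let ?gx = "apply_bcontfun g (snd p)"
    have ng: "norm ?gx \<le> G" unfolding G_def by (rule norm_bounded)
    show ?thesis
    proof (cases "p \<in> F")
      case True
      have "norm (e p - t *\<^sub>R ?gx) \<le> norm (e p) + norm (t *\<^sub>R ?gx)" by (rule norm_triangle_ineq4)
      also have "\<dots> \<le> M1 + t * G"
      proof -
        have "t * norm ?gx \<le> t * G" using ng tpos by (intro mult_left_mono) auto
        moreover have "norm (t *\<^sub>R ?gx) = t * norm ?gx" using tpos by simp
        ultimately show ?thesis using M1(3)[OF True] by linarith
      qed
      also have "\<dots> < M" using t1 by simp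
      finally show ?thesis .
    next
      case False
      then have ip: "inner (e p) ?gx > \<delta> / 2" unfolding F_def by auto
      have "(norm (e p - t *\<^sub>R ?gx))\<^sup>2 = (norm (e p))\<^sup>2 - 2 * t * inner (e p) ?gx + t * t * (norm ?gx)\<^sup>2"
        by (simp add: power2_norm_eq_inner inner_diff_left inner_diff_right inner_commute algebra_simps)
      also have "\<dots> \<le> M\<^sup>2 - 2 * t * inner (e p) ?gx + t * t * (G * G)"
      proof -
        have "(norm (e p))\<^sup>2 \<le> M\<^sup>2" using eM'[of p] by (simp add: power_mono)
        moreover have "(norm ?gx)\<^sup>2 \<le> G * G" using ng by (metis norm_ge_zero power2_eq_square mult_mono')
        then have "t * t * (norm ?gx)\<^sup>2 \<le> t * t * (G * G)" using tpos by (intro mult_left_mono) auto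
        ultimately show ?thesis by linarith
      qed
      also have "\<dots> < M\<^sup>2"
      proof -
        have "2 * t * inner (e p) ?gx > 2 * t * (\<delta> / 2)" using ip tpos by simp
        moreover have "t * (t * (G * G)) < t * \<delta>" using t2 tpos by simp
        ultimately show ?thesis by (simp add: algebra_simps)
      qed
      finally show ?thesis using Mpos by (smt (verit) power_mono norm_ge_zero)
    qed
  qed
  define q where "q = (\<lambda>p. norm (e p - t *\<^sub>R apply_bcontfun g (snd p)))"
  have cq: "continuous_on UNIV q" unfolding q_def
    by (intro continuous_on_norm continuous_on_diff ce continuous_on_scaleR continuous_on_const cg)
  from continuous_attains_sup[OF cU _ cq] obtain p2 where p2: "\<And>p. q p \<le> q p2" by auto
  have "norm (fa a - (fstar + t *\<^sub>R g)) \<le> q p2" for a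
  proof (rule norm_bound)
    fix x
    have "apply_bcontfun (fa a - (fstar + t *\<^sub>R g)) x = e (a, x) - t *\<^sub>R apply_bcontfun g (snd (a, x))"
      unfolding e_def by (simp add: algebra_simps)
    then show "norm (apply_bcontfun (fa a - (fstar + t *\<^sub>R g)) x) \<le> q p2"
      using p2[of "(a, x)"] unfolding q_def by (simp only:)
  qed
  then have "(SUP a. norm (fa a - (fstar + t *\<^sub>R g))) \<le> q p2" by (intro cSUP_least) auto
  also have "q p2 < M" unfolding q_def by (rule key)
  finally show ?thesis by blast
qed




theorem corollary3:
  fixes H :: "('x::t2_space \<Rightarrow>\<^sub>C 'y::real_inner) set"
    and fa :: "'a::t2_space \<Rightarrow> ('x \<Rightarrow>\<^sub>C 'y)"
    and fstar :: "'x \<Rightarrow>\<^sub>C 'y"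
    and n :: nat
  assumes "compact (UNIV :: 'x set)"
    and "compact (UNIV :: 'a set)"
    and "subspace H" and "dim H = n" and "n \<ge> 1"
    and "continuous_on UNIV fa"
    and "fstar \<in> H"
  shows "(\<forall>f\<in>H. (SUP a. norm (fa a - fstar)) \<le> (SUP a. norm (fa a - f)))
     \<longleftrightarrow>
     (\<exists>k::nat. 1 \<le> k \<and> k \<le> n + 1 \<and>
       (\<exists>as :: nat \<Rightarrow> 'a. \<exists>xs :: nat \<Rightarrow> 'x. \<exists>lam :: nat \<Rightarrow> real.
          (\<forall>i\<in>{1..k}. lam i > 0) \<and> (\<Sum>i=1..k. lam i) = 1 \<and>
          (\<forall>f\<in>H. (\<Sum>i=1..k. lam i *
              inner (apply_bcontfun (fa (as i)) (xs i) - apply_bcontfun fstar (xs i))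
                    (apply_bcontfun f (xs i))) = 0) \<and>
          (\<forall>i\<in>{1..k}.
              norm (apply_bcontfun (fa (as i)) (xs i) - apply_bcontfun fstar (xs i))
                = norm (fa (as i) - fstar) \<and>
              norm (fa (as i) - fstar) = (SUP a. norm (fa a - fstar)))))"
proof -
  define M where "M = (SUP a. norm (fa a - fstar))"
  have cnorm: "\<And>g. continuous_on UNIV (\<lambda>a. norm (fa a - g))"
    by (intro continuous_on_norm continuous_on_diff assms(6) continuous_on_const)
  have bdd: "\<And>g. bdd_above (range (\<lambda>a. norm (fa a - g)))"
    by (rule bounded_imp_bdd_above[OF compact_imp_bounded[OF compact_continuous_image[OF cnorm assms(2)]]])
  have leM: "\<And>a. norm (fa a - fstar) \<le> M" unfolding M_def by (rule cSUP_upper[OF UNIV_I bdd])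
  have eM: "\<And>a x. norm (apply_bcontfun (fa a) x - apply_bcontfun fstar x) \<le> M"
    using norm_bounded leM by (metis minus_bcontfun.rep_eq order_trans)
  have M0: "M \<ge> 0" using leM[of undefined] norm_ge_zero order_trans by blast
  show ?thesis unfolding M_def[symmetric]
  proof
    assume opt: "\<forall>f\<in>H. M \<le> (SUP a. norm (fa a - f))"
    show "\<exists>k::nat. 1 \<le> k \<and> k \<le> n + 1 \<and>
       (\<exists>as :: nat \<Rightarrow> 'a. \<exists>xs :: nat \<Rightarrow> 'x. \<exists>lam :: nat \<Rightarrow> real.
          (\<forall>i\<in>{1..k}. lam i > 0) \<and> (\<Sum>i=1..k. lam i) = 1 \<and>
          (\<forall>f\<in>H. (\<Sum>i=1..k. lam i *
              inner (apply_bcontfun (fa (as i)) (xs i) - apply_bcontfun fstar (xs i))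
                    (apply_bcontfun f (xs i))) = 0) \<and>
          (\<forall>i\<in>{1..k}.
              norm (apply_bcontfun (fa (as i)) (xs i) - apply_bcontfun fstar (xs i))
                = norm (fa (as i) - fstar) \<and>
              norm (fa (as i) - fstar) = M))"
    proof (cases "M = 0")
      case True
      have z: "\<And>a x. apply_bcontfun (fa a) x - apply_bcontfun fstar x = 0"
        using eM True by (metis norm_le_zero_iff)
      have z2: "\<And>a. norm (fa a - fstar) = 0"
        using leM True by (metis norm_ge_zero order_antisym)
      show ?thesis
        by (rule exI[of _ 1], rule conjI, simp, rule conjI, simp,
            rule exI[of _ "\<lambda>_. undefined"], rule exI[of _ "\<lambda>_. undefined"], rule exI[of _ "\<lambda>_. 1"])
           (simp add: z z2 True)
    next
      case False
      then have Mpos: "M > 0" using M0 by simp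
      obtain B where B: "B \<subseteq> H" "independent B" "H \<subseteq> span B" "card B = n"
        using basis_exists[of H] assms(4) by metis
      have finB: "finite B" using B(4) assms(5) by (intro card_ge_0_finite) simp
      obtain b where bb: "bij_betw b {0..<n} B"
        using ex_bij_betw_nat_finite[OF finB] B(4) by metis
      have bH: "\<And>j. j < n \<Longrightarrow> b j \<in> H" using bb B(1) by (auto simp: bij_betw_def)
      define e where "e = (\<lambda>p::'a \<times> 'x. apply_bcontfun (fa (fst p)) (snd p) - apply_bcontfun fstar (snd p))"
      have ce: "continuous_on UNIV e"
        unfolding e_def
        by (intro continuous_on_diff joint_cont[OF assms(6)] continuous_on_compose2[OF continuous_on_apply_bcontfun continuous_on_snd]) auto
      define \<phi> where "\<phi> = (\<lambda>j p. inner (e p) (apply_bcontfun (b j) (snd p)))"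
      define \<Psi> where "\<Psi> = (\<lambda>p. (\<Sum>j<n. \<phi> j p *\<^sub>R unitv j))"
      have Rep\<Psi>: "Rep_fsv (\<Psi> p) i = (if i < n then \<phi> i p else 0)" for p i
      proof -
        have "Rep_fsv (\<Psi> p) i = (\<Sum>j<n. if j = i then \<phi> j p else 0)"
          unfolding \<Psi>_def Rep_sum by (intro sum.cong) (auto simp: Rep_unitv)
        also have "\<dots> = (if i < n then \<phi> i p else 0)" by (simp add: sum.delta')
        finally show ?thesis .
      qed
      have c\<phi>: "continuous_on UNIV (\<phi> j)" for j
        unfolding \<phi>_def
        by (intro continuous_on_inner ce continuous_on_compose2[OF continuous_on_apply_bcontfun continuous_on_snd]) auto
      have c\<Psi>: "continuous_on UNIV \<Psi>"
        unfolding \<Psi>_def by (intro continuous_on_sum continuous_on_scaleR c\<phi> continuous_on_const)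
      have cU: "compact (UNIV :: ('a \<times> 'x) set)"
        using compact_Times[OF assms(2) assms(1)] by simp
      define E where "E = {p. norm (e p) = M}"
      have "closed E" unfolding E_def
        by (intro closed_Collect_eq continuous_on_norm ce continuous_on_const)
      then have cE: "compact E" using cU by (metis compact_Int_closed inf_top.left_neutral)
      have "E \<noteq> {}"
      proof -
        obtain a0 where a0: "\<And>a. norm (fa a - fstar) \<le> norm (fa a0 - fstar)"
          using continuous_attains_sup[OF assms(2) _ cnorm[of fstar]] by auto
        have Ma0: "M \<le> norm (fa a0 - fstar)" unfolding M_def by (rule cSUP_least) (auto intro: a0)
        have "continuous_on UNIV (\<lambda>x. norm (apply_bcontfun (fa a0) x - apply_bcontfun fstar x))"
          by (intro continuous_on_norm continuous_on_diff continuous_on_apply_bcontfun)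
        then obtain x0 where x0: "\<And>x. norm (apply_bcontfun (fa a0) x - apply_bcontfun fstar x)
            \<le> norm (apply_bcontfun (fa a0) x0 - apply_bcontfun fstar x0)"
          using continuous_attains_sup[OF assms(1)] by blast
        have "norm (fa a0 - fstar) \<le> norm (apply_bcontfun (fa a0) x0 - apply_bcontfun fstar x0)"
          by (rule norm_bound) (use x0 in simp)
        then have "norm (e (a0, x0)) = M" using Ma0 eM[of a0 x0] unfolding e_def by simp
        then show ?thesis unfolding E_def by blast
      qed
      define W where "W = \<Psi> ` E"
      have cW: "compact W" unfolding W_def
        by (rule compact_continuous_image[OF continuous_on_subset[OF c\<Psi>] cE]) auto
      have W0: "W \<noteq> {}" unfolding W_def using \<open>E \<noteq> {}\<close> by simp
      define U where "U = unitv ` {..<n}"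
      have finU: "finite U" unfolding U_def by simp
      have cardU: "card U \<le> n" unfolding U_def using card_image_le[of "{..<n}" unitv] by simp
      have PsiU: "\<Psi> p \<in> span U" for p
        unfolding \<Psi>_def U_def by (intro span_sum span_scale span_base) auto
      have WU: "W \<subseteq> span U" unfolding W_def using PsiU by auto
      have fsuppPsi: "fsupp (\<Psi> p) \<subseteq> {..<n}" for p
        unfolding fsupp_def using Rep\<Psi> by (auto split: if_splits)
      have zero_in: "0 \<in> convex hull W"
      proof (rule ccontr)
        assume "0 \<notin> convex hull W"
        from sep_min_norm[OF cW W0 finU WU this] obtain y where y: "y \<noteq> 0" "\<forall>w\<in>W. inner y y \<le> inner y w"
          by blast
        define \<delta> where "\<delta> = inner y y"
        have dpos: "\<delta> > 0" unfolding \<delta>_def using y(1) by simp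
        define g where "g = (\<Sum>j<n. Rep_fsv y j *\<^sub>R b j)"
        have gH: "g \<in> H" unfolding g_def
          using assms(3) bH by (intro subspace_sum subspace_scale) auto
        have innerg: "inner (e p) (apply_bcontfun g (snd p)) = inner y (\<Psi> p)" for p
        proof -
          have "inner (e p) (apply_bcontfun g (snd p)) = (\<Sum>j<n. Rep_fsv y j * \<phi> j p)"
            unfolding g_def apply_sum \<phi>_def by (simp add: inner_sum_right)
          also have "\<dots> = (\<Sum>j<n. Rep_fsv y j * Rep_fsv (\<Psi> p) j)"
            by (intro sum.cong) (auto simp: Rep\<Psi>)
          also have "\<dots> = inner y (\<Psi> p)"
            unfolding inner_fsv_def using fdot_eq2[of "{..<n}" "\<Psi> p" y] fsuppPsi by simp
          finally show ?thesis .
        qed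
        have hyp: "inner (apply_bcontfun (fa a) x - apply_bcontfun fstar x) (apply_bcontfun g x) \<ge> \<delta>"
          if "norm (apply_bcontfun (fa a) x - apply_bcontfun fstar x) = M" for a x
        proof -
          have "(a, x) \<in> E" unfolding E_def e_def using that by simp
          then have "\<Psi> (a, x) \<in> W" unfolding W_def by simp
          then have "\<delta> \<le> inner y (\<Psi> (a, x))" using y(2) unfolding \<delta>_def by blast
          also have "\<dots> = inner (e (a, x)) (apply_bcontfun g (snd (a, x)))" by (rule innerg[symmetric])
          finally show ?thesis unfolding e_def by simp
        qed
        from improve[OF assms(1,2,6) Mpos eM dpos hyp] obtain t
          where t: "(SUP a. norm (fa a - (fstar + t *\<^sub>R g))) < M" by blast
        have "fstar + t *\<^sub>R g \<in> H" using assms(3,7) gH by (intro subspace_add subspace_scale) auto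
        then show False using opt t by fastforce
      qed
      from carath_dim[OF finU WU zero_in] obtain S u where Su: "finite S" "S \<subseteq> W" "card S \<le> card U + 1"
        "\<forall>x\<in>S. 0 \<le> u x" "sum u S = 1" "(\<Sum>v\<in>S. u v *\<^sub>R v) = 0" by blast
      define S' where "S' = {v\<in>S. u v \<noteq> 0}"
      have finS': "finite S'" unfolding S'_def using Su(1) by simp
      have S'S: "S' \<subseteq> S" unfolding S'_def by auto
      have sumS': "sum u S' = 1"
        using Su(5) sum.mono_neutral_left[OF Su(1) S'S, of u] unfolding S'_def by auto
      have sumvS': "(\<Sum>v\<in>S'. u v *\<^sub>R v) = 0"
        using Su(6) sum.mono_neutral_left[OF Su(1) S'S, of "\<lambda>v. u v *\<^sub>R v"] unfolding S'_def by auto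
      have S'ne: "S' \<noteq> {}" using sumS' by auto
      define k where "k = card S'"
      have k1: "1 \<le> k" unfolding k_def using finS' S'ne by (simp add: Suc_leI card_gt_0_iff)
      have kn: "k \<le> n + 1" unfolding k_def using card_mono[OF Su(1) S'S] Su(3) cardU by simp
      obtain h where hb: "bij_betw h {1..k} S'" using ex_bij_betw_nat_finite_1[OF finS'] unfolding k_def by blast
      define pre where "pre = (\<lambda>v. SOME p. p \<in> E \<and> \<Psi> p = v)"
      have pre: "pre v \<in> E \<and> \<Psi> (pre v) = v" if "v \<in> S'" for v
      proof -
        have "v \<in> W" using that S'S Su(2) by auto
        then have "\<exists>p. p \<in> E \<and> \<Psi> p = v" unfolding W_def by auto
        then show ?thesis unfolding pre_def by (rule someI_ex)
      qed
      have hS': "\<And>i. i \<in> {1..k} \<Longrightarrow> h i \<in> S'" using hb by (auto simp: bij_betw_def)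
      have upos: "\<And>v. v \<in> S' \<Longrightarrow> u v > 0" using Su(4) S'S unfolding S'_def by force
      show ?thesis
      proof (intro exI conjI)
        show "1 \<le> k" by (rule k1)
        show "k \<le> n + 1" by (rule kn)
        show "\<forall>i\<in>{1..k}. (\<lambda>i. u (h i)) i > 0" using hS' upos by auto
        show "(\<Sum>i=1..k. (\<lambda>i. u (h i)) i) = 1"
          using sum.reindex_bij_betw[OF hb, of u] sumS' by simp
        show "\<forall>f\<in>H. (\<Sum>i=1..k. (\<lambda>i. u (h i)) i *
              inner (apply_bcontfun (fa ((\<lambda>i. fst (pre (h i))) i)) ((\<lambda>i. snd (pre (h i))) i) - apply_bcontfun fstar ((\<lambda>i. snd (pre (h i))) i))
                    (apply_bcontfun f ((\<lambda>i. snd (pre (h i))) i))) = 0"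
        proof
          fix f assume fH: "f \<in> H"
          define L where "L = (\<lambda>f. \<Sum>v\<in>S'. u v * inner (e (pre v)) (apply_bcontfun f (snd (pre v))))"
          have Lsub: "subspace {f. L f = 0}"
            unfolding subspace_def L_def
            by (simp add: inner_add_right sum.distrib algebra_simps sum_distrib_left[symmetric])
          have LB: "L f = 0" if "f \<in> B" for f
          proof -
            have "f \<in> b ` {0..<n}" using that bb by (simp add: bij_betw_def)
            then obtain j where j: "j < n" "f = b j" by auto
            have "L f = (\<Sum>v\<in>S'. u v * Rep_fsv v j)"
              unfolding L_def
            proof (intro sum.cong refl)
              fix v assume "v \<in> S'"
              then have "Rep_fsv v j = \<phi> j (pre v)" using pre[of v] Rep\<Psi>[of "pre v" j] j(1) by auto
              then show "u v * inner (e (pre v)) (apply_bcontfun f (snd (pre v))) = u v * Rep_fsv v j"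
                unfolding \<phi>_def j(2) by simp
            qed
            also have "\<dots> = Rep_fsv (\<Sum>v\<in>S'. u v *\<^sub>R v) j" by (simp add: Rep_sum)
            also have "\<dots> = 0" using sumvS' by simp
            finally show ?thesis .
          qed
          have "f \<in> span B" using fH B(3) by auto
          then have Lf: "L f = 0"
            by (rule span_induct[where P = "\<lambda>f. L f = 0"]) (use Lsub LB in auto)
          have "(\<Sum>i=1..k. u (h i) * inner (e (pre (h i))) (apply_bcontfun f (snd (pre (h i))))) = L f"
            unfolding L_def by (rule sum.reindex_bij_betw[OF hb, of "\<lambda>v. u v * inner (e (pre v)) (apply_bcontfun f (snd (pre v)))"])
          then show "(\<Sum>i=1..k. (\<lambda>i. u (h i)) i *
              inner (apply_bcontfun (fa ((\<lambda>i. fst (pre (h i))) i)) ((\<lambda>i. snd (pre (h i))) i) - apply_bcontfun fstar ((\<lambda>i. snd (pre (h i))) i))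
                    (apply_bcontfun f ((\<lambda>i. snd (pre (h i))) i))) = 0"
            using Lf unfolding e_def by simp
        qed
        show "\<forall>i\<in>{1..k}.
              norm (apply_bcontfun (fa ((\<lambda>i. fst (pre (h i))) i)) ((\<lambda>i. snd (pre (h i))) i) - apply_bcontfun fstar ((\<lambda>i. snd (pre (h i))) i))
                = norm (fa ((\<lambda>i. fst (pre (h i))) i) - fstar) \<and>
              norm (fa ((\<lambda>i. fst (pre (h i))) i) - fstar) = M"
        proof
          fix i assume i: "i \<in> {1..k}"
          define p where "p = pre (h i)"
          have "p \<in> E" unfolding p_def using pre hS'[OF i] by blast
          then have nE: "norm (e p) = M" unfolding E_def by simp
          have "norm (e p) \<le> norm (fa (fst p) - fstar)"
            unfolding e_def using norm_bounded[of "fa (fst p) - fstar" "snd p"] by simp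
          moreover have "norm (fa (fst p) - fstar) \<le> M" by (rule leM)
          ultimately have "norm (fa (fst p) - fstar) = M" using nE by simp
          then show "norm (apply_bcontfun (fa ((\<lambda>i. fst (pre (h i))) i)) ((\<lambda>i. snd (pre (h i))) i) - apply_bcontfun fstar ((\<lambda>i. snd (pre (h i))) i))
                = norm (fa ((\<lambda>i. fst (pre (h i))) i) - fstar) \<and>
              norm (fa ((\<lambda>i. fst (pre (h i))) i) - fstar) = M"
            using nE unfolding p_def e_def by simp
        qed
      qed
    qed
  next
    assume "\<exists>k::nat. 1 \<le> k \<and> k \<le> n + 1 \<and>
       (\<exists>as :: nat \<Rightarrow> 'a. \<exists>xs :: nat \<Rightarrow> 'x. \<exists>lam :: nat \<Rightarrow> real.
          (\<forall>i\<in>{1..k}. lam i > 0) \<and> (\<Sum>i=1..k. lam i) = 1 \<and>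
          (\<forall>f\<in>H. (\<Sum>i=1..k. lam i *
              inner (apply_bcontfun (fa (as i)) (xs i) - apply_bcontfun fstar (xs i))
                    (apply_bcontfun f (xs i))) = 0) \<and>
          (\<forall>i\<in>{1..k}.
              norm (apply_bcontfun (fa (as i)) (xs i) - apply_bcontfun fstar (xs i))
                = norm (fa (as i) - fstar) \<and>
              norm (fa (as i) - fstar) = M))"
    then obtain k :: nat and as :: "nat \<Rightarrow> 'a" and xs :: "nat \<Rightarrow> 'x" and lam :: "nat \<Rightarrow> real" where k: "1 \<le> k"
      and lpos: "\<forall>i\<in>{1..k}. lam i > (0::real)" and lsum: "(\<Sum>i=1..k. lam i) = 1"
      and orth: "\<forall>f\<in>H. (\<Sum>i=1..k. lam i *
              inner (apply_bcontfun (fa (as i)) (xs i) - apply_bcontfun fstar (xs i))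
                    (apply_bcontfun f (xs i))) = 0"
      and eqs: "\<forall>i\<in>{1..k}.
              norm (apply_bcontfun (fa (as i)) (xs i) - apply_bcontfun fstar (xs i))
                = norm (fa (as i) - fstar) \<and> norm (fa (as i) - fstar) = M"
      by blast
    show "\<forall>f\<in>H. M \<le> (SUP a. norm (fa a - f))"
    proof
      fix f assume fH: "f \<in> H"
      define S where "S = (SUP a. norm (fa a - f))"
      show "M \<le> (SUP a. norm (fa a - f))" unfolding S_def[symmetric]
      proof (rule ccontr)
        assume "\<not> M \<le> S"
        then have SM: "S < M" by simp
        define d where "d = fstar - f"
        have dH: "d \<in> H" unfolding d_def using assms(3,7) fH by (rule subspace_diff)
        define ei where "ei = (\<lambda>i. apply_bcontfun (fa (as i)) (xs i) - apply_bcontfun fstar (xs i))"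
        define di where "di = (\<lambda>i. apply_bcontfun d (xs i))"
        have nei: "\<And>i. i \<in> {1..k} \<Longrightarrow> norm (ei i) = M" using eqs unfolding ei_def by auto
        have lt: "(norm (ei i + di i))\<^sup>2 < M\<^sup>2" if i: "i \<in> {1..k}" for i
        proof -
          have "ei i + di i = apply_bcontfun (fa (as i) - f) (xs i)"
            unfolding ei_def di_def d_def by simp
          then have "norm (ei i + di i) \<le> norm (fa (as i) - f)" using norm_bounded by metis
          also have "\<dots> \<le> S" unfolding S_def by (rule cSUP_upper[OF UNIV_I bdd])
          finally have "norm (ei i + di i) < M" using SM by simp
          then show ?thesis by (simp add: power_strict_mono)
        qed
        have ge: "(norm (ei i + di i))\<^sup>2 \<ge> M\<^sup>2 + 2 * inner (ei i) (di i)" if i: "i \<in> {1..k}" for i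
        proof -
          have "(norm (ei i + di i))\<^sup>2 = (norm (ei i))\<^sup>2 + 2 * inner (ei i) (di i) + (norm (di i))\<^sup>2"
            by (simp add: power2_norm_eq_inner inner_add_left inner_add_right inner_commute)
          then show ?thesis using nei[OF i] by simp
        qed
        have "(\<Sum>i=1..k. lam i * (norm (ei i + di i))\<^sup>2) < (\<Sum>i=1..k. lam i * M\<^sup>2)"
          using k lpos lt by (intro sum_strict_mono) auto
        also have "\<dots> = M\<^sup>2" using lsum by (simp add: sum_distrib_right[symmetric])
        finally have A: "(\<Sum>i=1..k. lam i * (norm (ei i + di i))\<^sup>2) < M\<^sup>2" .
        have "(\<Sum>i=1..k. lam i * (M\<^sup>2 + 2 * inner (ei i) (di i))) \<le> (\<Sum>i=1..k. lam i * (norm (ei i + di i))\<^sup>2)"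
          using lpos ge by (intro sum_mono mult_left_mono) (auto simp: less_imp_le)
        moreover have "(\<Sum>i=1..k. lam i * (M\<^sup>2 + 2 * inner (ei i) (di i))) = M\<^sup>2 + 2 * (\<Sum>i=1..k. lam i * inner (ei i) (di i))"
          using lsum by (simp add: algebra_simps sum.distrib sum_distrib_left sum_distrib_right[symmetric])
        moreover have "(\<Sum>i=1..k. lam i * inner (ei i) (di i)) = 0"
          using orth dH unfolding ei_def di_def by blast
        ultimately show False using A by simp
      qed
    qed
  qed
qed


end
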